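(* Let $C\subseteq V(K_n\times K_m)$ satisfy: (1) there exist $1\le n_1<n_2<n_3\le n$ and $1\le m_1<m_2<m_3\le m$ with $(n_1,m_1),(n_2,m_2),(n_3,m_3)\in C$; (2) every $v\in C$ is row-isolated or column-isolated in $C$; (3) $rs(C)=m-1$ and $cs(C)=n$; (4) at most one vertex of $C$ is isolated in $C$; (5) for every row $R_r$ such that every $v\in C\cap R_r$ is column-isolated but not row-isolated in $C$, we have $|C\cap R_r|\ge 3$. Then $C$ is an identifying code of $K_n\times K_m$.
   Context: $K_n\times K_m$ is the direct product of complete graphs: vertex set $[n]\times[m]$, with $(i,r)$ adjacent to $(j,s)$ iff $i\ne j$ and $r \ne s$. An identifying code is a dominating set $C$ with $N[x]\cap C\ne N[y]\cap C$ for all distinct vertices $x,y$ ($N[x]$ the closed neighborhood). Columns: $C_i=\{(i,t):t\in[m]\}$; rows: $R_r=\{(k,r):k\in[n]\}$. $cs(C)$ (resp. $rs(C)$) is the number of columns (resp. rows) meeting $C$. A vertex $v=(i,r)$ is column-isolated in $C$ if $C\cap C_i=\{v\}$, row-isolated in $C$ if $C\cap R_r=\{v\}$, and isolated in $C$ if both. *)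

theory Defs
  imports Main
begin

definition verts :: "nat \<Rightarrow> nat \<Rightarrow> (nat \<times> nat) set" where
  "verts n m = {1..n} \<times> {1..m}"

definition adj :: "nat \<times> nat \<Rightarrow> nat \<times> nat \<Rightarrow> bool" where
  "adj x y \<longleftrightarrow> fst x \<noteq> fst y \<and> snd x \<noteq> snd y"

definition cnbhd :: "nat \<Rightarrow> nat \<Rightarrow> nat \<times> nat \<Rightarrow> (nat \<times> nat) set" where
  "cnbhd n m x = {y \<in> verts n m. adj x y} \<union> {x}"

definition dominating :: "nat \<Rightarrow> nat \<Rightarrow> (nat \<times> nat) set \<Rightarrow> bool" where
  "dominating n m C \<longleftrightarrow> C \<subseteq> verts n m \<and> (\<forall>x \<in> verts n m. cnbhd n m x \<inter> C \<noteq> {})"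

definition identifying_code :: "nat \<Rightarrow> nat \<Rightarrow> (nat \<times> nat) set \<Rightarrow> bool" where
  "identifying_code n m C \<longleftrightarrow> dominating n m C \<and>
     (\<forall>x \<in> verts n m. \<forall>y \<in> verts n m. x \<noteq> y \<longrightarrow> cnbhd n m x \<inter> C \<noteq> cnbhd n m y \<inter> C)"

definition col :: "nat \<Rightarrow> nat \<Rightarrow> (nat \<times> nat) set" where
  "col m i = {(i, t) | t. t \<in> {1..m}}"

definition row :: "nat \<Rightarrow> nat \<Rightarrow> (nat \<times> nat) set" where
  "row n r = {(k, r) | k. k \<in> {1..n}}"

definition cs :: "nat \<Rightarrow> nat \<Rightarrow> (nat \<times> nat) set \<Rightarrow> nat" where
  "cs n m C = card {i \<in> {1..n}. C \<inter> col m i \<noteq> {}}"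

definition rs :: "nat \<Rightarrow> nat \<Rightarrow> (nat \<times> nat) set \<Rightarrow> nat" where
  "rs n m C = card {r \<in> {1..m}. C \<inter> row n r \<noteq> {}}"

definition col_isolated :: "nat \<Rightarrow> (nat \<times> nat) set \<Rightarrow> nat \<times> nat \<Rightarrow> bool" where
  "col_isolated m C v \<longleftrightarrow> C \<inter> col m (fst v) = {v}"

definition row_isolated :: "nat \<Rightarrow> (nat \<times> nat) set \<Rightarrow> nat \<times> nat \<Rightarrow> bool" where
  "row_isolated n C v \<longleftrightarrow> C \<inter> row n (snd v) = {v}"

definition isolated :: "nat \<Rightarrow> nat \<Rightarrow> (nat \<times> nat) set \<Rightarrow> nat \<times> nat \<Rightarrow> bool" where
  "isolated n m C v \<longleftrightarrow> row_isolated n C v \<and> col_isolated m C v"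

end

theory Submission
  imports Defs
begin

lemma cn_iff: "C \<subseteq> verts n m \<Longrightarrow> z \<in> C \<Longrightarrow>
   (z \<in> cnbhd n m x) = (z = x \<or> (fst z \<noteq> fst x \<and> snd z \<noteq> snd x))"
  unfolding cnbhd_def adj_def by auto

lemma rowC: "C \<subseteq> verts n m \<Longrightarrow> C \<inter> row n r = {z\<in>C. snd z = r}"
  by (auto simp: row_def verts_def)

lemma colC: "C \<subseteq> verts n m \<Longrightarrow> C \<inter> col m i = {z\<in>C. fst z = i}"
  by (auto simp: col_def verts_def)

lemma row_iso_iff: "C \<subseteq> verts n m \<Longrightarrow> row_isolated n C v \<longleftrightarrow> {z\<in>C. snd z = snd v} = {v}"
  unfolding row_isolated_def using rowC by metis

lemma col_iso_iff: "C \<subseteq> verts n m \<Longrightarrow> col_isolated m C v \<longleftrightarrow> {z\<in>C. fst z = fst v} = {v}"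
  unfolding col_isolated_def using colC by metis

lemma col_full:
  assumes "C \<subseteq> verts n m" "cs n m C = n" "i \<in> {1..n}"
  shows "\<exists>z\<in>C. fst z = i"
proof -
  let ?A = "{i \<in> {1..n}. C \<inter> col m i \<noteq> {}}"
  have "?A \<subseteq> {1..n}" by auto
  moreover have "card ?A = card {1..n}" using assms(2) unfolding cs_def by simp
  ultimately have "?A = {1..n}" by (simp add: card_subset_eq)
  then have "C \<inter> col m i \<noteq> {}" using assms(3) by auto
  then obtain z where "z \<in> C \<inter> col m i" by blast
  then show ?thesis unfolding colC[OF assms(1)] by blast
qed

lemma row_ne:
  assumes "rs n m C = m - 1" "r \<in> {1..m}" "s \<in> {1..m}" "r \<noteq> s"
  shows "C \<inter> row n r \<noteq> {} \<or> C \<inter> row n s \<noteq> {}"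
proof (rule ccontr)
  assume h: "\<not> ?thesis"
  let ?B = "{r \<in> {1..m}. C \<inter> row n r \<noteq> {}}"
  have "?B \<subseteq> {1..m} - {r,s}" using h by auto
  then have "card ?B \<le> card ({1..m} - {r,s})" by (intro card_mono) auto
  also have "\<dots> = m - 2" using assms by (subst card_Diff_subset) auto
  finally have "m - 1 \<le> m - 2" using assms(1) unfolding rs_def by simp
  moreover have "m \<ge> 2" using assms by auto
  ultimately show False by simp
qed

lemma L1: "(\<And>t. (i,t) \<in> C \<Longrightarrow> t = r \<or> t = s) \<Longrightarrow> (i,r) \<in> C \<Longrightarrow> (i,s) \<notin> C \<Longrightarrow> {z\<in>C. fst z = i} = {(i,r)}"
  by force
lemma L2: "(\<And>k. (k,r) \<in> C \<Longrightarrow> k = i \<or> k = j) \<Longrightarrow> (i,r) \<in> C \<Longrightarrow> (j,r) \<notin> C \<Longrightarrow> {z\<in>C. snd z = r} = {(i,r)}"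
  by force
lemma L3: "(\<And>k. (k,r) \<in> C \<Longrightarrow> k = i \<or> k = j) \<Longrightarrow> (i,r) \<in> C \<Longrightarrow> (j,r) \<in> C \<Longrightarrow> {z\<in>C. snd z = r} = {(i,r),(j,r)}"
  by force
lemma L4: "v \<in> C \<Longrightarrow> w \<in> C \<Longrightarrow> w \<noteq> v \<Longrightarrow> fst w = fst v \<Longrightarrow> {z\<in>C. fst z = fst v} \<noteq> {v}"
  by blast
lemma L4': "v \<in> C \<Longrightarrow> w \<in> C \<Longrightarrow> w \<noteq> v \<Longrightarrow> snd w = snd v \<Longrightarrow> {z\<in>C. snd z = snd v} \<noteq> {v}"
  by blast
lemma L5: "{z\<in>C. snd z = q} = {v} \<Longrightarrow> w \<in> C \<Longrightarrow> snd w = q \<Longrightarrow> w = v"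
  by blast

theorem mainTheorem13:
  fixes n m :: nat and C :: "(nat \<times> nat) set"
  assumes sub: "C \<subseteq> verts n m"
    and diag: "\<exists>n1 n2 n3 m1 m2 m3. 1 \<le> n1 \<and> n1 < n2 \<and> n2 < n3 \<and> n3 \<le> n \<and>
                 1 \<le> m1 \<and> m1 < m2 \<and> m2 < m3 \<and> m3 \<le> m \<and>
                 (n1, m1) \<in> C \<and> (n2, m2) \<in> C \<and> (n3, m3) \<in> C"
    and iso: "\<forall>v \<in> C. row_isolated n C v \<or> col_isolated m C v"
    and rsC: "rs n m C = m - 1"
    and csC: "cs n m C = n"
    and one_iso: "card {v \<in> C. isolated n m C v} \<le> 1"
    and rows: "\<forall>r \<in> {1..m}. C \<inter> row n r \<noteq> {} \<and> (\<forall>v \<in> C \<inter> row n r. col_isolated m C v \<and> \<not> row_isolated n C v)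
                 \<longrightarrow> card (C \<inter> row n r) \<ge> 3"
  shows "identifying_code n m C"
proof -
  have finC: "finite C" using sub finite_subset unfolding verts_def by blast
  have dom: "dominating n m C"
    unfolding dominating_def
  proof (intro conjI ballI)
    show "C \<subseteq> verts n m" by fact
    fix x assume x: "x \<in> verts n m"
    obtain n1 n2 n3 m1 m2 m3 where h: "1 \<le> n1 \<and> n1 < n2 \<and> n2 < n3 \<and> n3 \<le> n \<and>
                 1 \<le> m1 \<and> m1 < m2 \<and> m2 < m3 \<and> m3 \<le> m \<and>
                 (n1, m1) \<in> C \<and> (n2, m2) \<in> C \<and> (n3, m3) \<in> C" using diag by blast
    obtain a b where ab: "x = (a,b)" by (cases x)
    have "(n1 \<noteq> a \<and> m1 \<noteq> b) \<or> (n2 \<noteq> a \<and> m2 \<noteq> b) \<or> (n3 \<noteq> a \<and> m3 \<noteq> b)"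
      using h by linarith
    then have "\<exists>p\<in>{(n1,m1),(n2,m2),(n3,m3)}. fst p \<noteq> a \<and> snd p \<noteq> b" by auto
    then obtain p where p: "p \<in> {(n1,m1),(n2,m2),(n3,m3)}" "fst p \<noteq> a" "snd p \<noteq> b" by blast
    have pC: "p \<in> C" using p(1) h by blast
    have e: "p \<in> cnbhd n m x \<longleftrightarrow> (p = x \<or> (fst p \<noteq> fst x \<and> snd p \<noteq> snd x))"
      by (rule cn_iff[OF sub pC])
    have "fst p \<noteq> fst x \<and> snd p \<noteq> snd x" using p(2,3) ab by simp
    then have "p \<in> cnbhd n m x" using e by blast
    then show "cnbhd n m x \<inter> C \<noteq> {}" using pC by blast
  qed
  have sep: False if x: "x \<in> verts n m" and y: "y \<in> verts n m" and xy: "x \<noteq> y"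
      and eq: "cnbhd n m x \<inter> C = cnbhd n m y \<inter> C" for x y
  proof -
    obtain i r where xd: "x = (i,r)" by (cases x)
    obtain j s where yd: "y = (j,s)" by (cases y)
    have E: "(z = (i,r) \<or> (fst z \<noteq> i \<and> snd z \<noteq> r)) \<longleftrightarrow> (z = (j,s) \<or> (fst z \<noteq> j \<and> snd z \<noteq> s))"
      if z: "z \<in> C" for z
    proof -
      have "z \<in> cnbhd n m x \<longleftrightarrow> z \<in> cnbhd n m y" using eq z by blast
      then show ?thesis using cn_iff[OF sub z] xd yd by simp
    qed
    have rng: "i \<in> {1..n}" "j \<in> {1..n}" "r \<in> {1..m}" "s \<in> {1..m}"
      using x y xd yd unfolding verts_def by auto
    show False
    proof (cases "i = j")
      case True
      then have rs: "r \<noteq> s" using xy xd yd by auto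
      obtain z where z: "z \<in> C" "snd z = r \<or> snd z = s"
        using row_ne[OF rsC rng(3,4) rs] rowC[OF sub] by blast
      then show False using E[OF z(1)] True rs by (cases z) auto
    next
      case ij: False
      show False
      proof (cases "r = s")
        case True
        obtain z where z: "z \<in> C" "fst z = j" using col_full[OF sub csC rng(2)] by blast
        then show False using E[OF z(1)] ij True by (cases z) auto
      next
        case rs: False
        have colI: "t = r \<or> t = s" if "(i,t) \<in> C" for t using E[OF that] ij rs by auto
        have colJ: "t = r \<or> t = s" if "(j,t) \<in> C" for t using E[OF that] ij rs by auto
        have rowR: "k = i \<or> k = j" if "(k,r) \<in> C" for k using E[OF that] ij rs by auto
        have rowS: "k = i \<or> k = j" if "(k,s) \<in> C" for k using E[OF that] ij rs by auto
        have ci: "(i,r) \<in> C \<or> (i,s) \<in> C"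
        proof -
          obtain z where z: "z \<in> C" "fst z = i" using col_full[OF sub csC rng(1)] by blast
          obtain t where "z = (i,t)" using z(2) by (cases z) auto
          then show ?thesis using z(1) colI[of t] by auto
        qed
        have cj: "(j,r) \<in> C \<or> (j,s) \<in> C"
        proof -
          obtain z where z: "z \<in> C" "fst z = j" using col_full[OF sub csC rng(2)] by blast
          obtain t where "z = (j,t)" using z(2) by (cases z) auto
          then show ?thesis using z(1) colJ[of t] by auto
        qed
        have RI: "row_isolated n C v \<longleftrightarrow> {z\<in>C. snd z = snd v} = {v}" for v
          using row_iso_iff[OF sub] .
        have CI: "col_isolated m C v \<longleftrightarrow> {z\<in>C. fst z = fst v} = {v}" for v
          using col_iso_iff[OF sub] .
        have ncol: "\<not> col_isolated m C v" if "v \<in> C" "w \<in> C" "w \<noteq> v" "fst w = fst v" for v w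
          unfolding CI by (rule L4[OF that])
        have nrow: "\<not> row_isolated n C v" if "v \<in> C" "w \<in> C" "w \<noteq> v" "snd w = snd v" for v w
          unfolding RI by (rule L4'[OF that])
        have risoD: "w = v" if "row_isolated n C v" "w \<in> C" "snd w = snd v" for v w
          by (rule L5[OF that(1)[unfolded RI] that(2,3)])
        have isoD: "row_isolated n C v" if "v \<in> C" "\<not> col_isolated m C v" for v
          using iso that by blast
        have n1: "\<not> ((i,r) \<in> C \<and> (i,s) \<in> C)"
        proof
          assume h: "(i,r) \<in> C \<and> (i,s) \<in> C"
          have "\<not> col_isolated m C (i,r)" using ncol[of "(i,r)" "(i,s)"] h rs by simp
          then have a: "row_isolated n C (i,r)" using isoD h by blast
          have "\<not> col_isolated m C (i,s)" using ncol[of "(i,s)" "(i,r)"] h rs by simp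
          then have b: "row_isolated n C (i,s)" using isoD h by blast
          have "(j,r) \<notin> C" using risoD[OF a, of "(j,r)"] ij by auto
          moreover have "(j,s) \<notin> C" using risoD[OF b, of "(j,s)"] ij by auto
          ultimately show False using cj by blast
        qed
        have n2: "\<not> ((j,r) \<in> C \<and> (j,s) \<in> C)"
        proof
          assume h: "(j,r) \<in> C \<and> (j,s) \<in> C"
          have "\<not> col_isolated m C (j,r)" using ncol[of "(j,r)" "(j,s)"] h rs by simp
          then have a: "row_isolated n C (j,r)" using isoD h by blast
          have "\<not> col_isolated m C (j,s)" using ncol[of "(j,s)" "(j,r)"] h rs by simp
          then have b: "row_isolated n C (j,s)" using isoD h by blast
          have "(i,r) \<notin> C" using risoD[OF a, of "(i,r)"] ij by auto
          moreover have "(i,s) \<notin> C" using risoD[OF b, of "(i,s)"] ij by auto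
          ultimately show False using ci by blast
        qed
        have two_iso: False if "u \<in> C" "w \<in> C" "u \<noteq> w" "isolated n m C u" "isolated n m C w" for u w
        proof -
          have "{u,w} \<subseteq> {v \<in> C. isolated n m C v}" using that by blast
          then have "card {u,w} \<le> card {v \<in> C. isolated n m C v}"
            by (rule card_mono[rotated]) (use finC in simp)
          then show False using that(3) one_iso by simp
        qed
        have bad_row: False if "q \<in> {1..m}" "a \<noteq> b" "{z\<in>C. snd z = q} = {(a,q),(b,q)}"
            "{z\<in>C. fst z = a} = {(a,q)}" "{z\<in>C. fst z = b} = {(b,q)}" for q a b
        proof -
          have R: "C \<inter> row n q = {(a,q),(b,q)}" using that(3) rowC[OF sub] by simp
          have c1: "col_isolated m C (a,q)" unfolding CI using that(4) by simp
          have c2: "col_isolated m C (b,q)" unfolding CI using that(5) by simp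
          have r1: "\<not> row_isolated n C (a,q)" unfolding RI using that(2,3) by simp
          have r2: "\<not> row_isolated n C (b,q)" unfolding RI using that(2,3) by simp
          have "\<forall>v \<in> C \<inter> row n q. col_isolated m C v \<and> \<not> row_isolated n C v"
            unfolding R using c1 c2 r1 r2 by simp
          moreover have "C \<inter> row n q \<noteq> {}" unfolding R by simp
          ultimately have "card (C \<inter> row n q) \<ge> 3" using rows that(1) by blast
          then show False using R that(2) by simp
        qed
        show False
        proof (cases "(i,r) \<in> C")
          case ir: True
          then have is': "(i,s) \<notin> C" using n1 by blast
          show False
          proof (cases "(j,s) \<in> C")
            case True
            then have jr: "(j,r) \<notin> C" using n2 by blast
            have "{z\<in>C. fst z = i} = {(i,r)}" by (rule L1[OF colI ir is'])
            moreover have "{z\<in>C. snd z = r} = {(i,r)}" by (rule L2[OF rowR ir jr])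
            moreover have "{z\<in>C. fst z = j} = {(j,s)}" by (rule L1[of j C s r]) (use colJ True jr in blast)+
            moreover have "{z\<in>C. snd z = s} = {(j,s)}" by (rule L2[of s C j i]) (use rowS True is' in blast)+
            ultimately have "isolated n m C (i,r)" "isolated n m C (j,s)"
              unfolding isolated_def CI RI by simp_all
            then show False using two_iso ir True ij by blast
          next
            case False
            then have jr: "(j,r) \<in> C" using cj by blast
            show False
            proof (rule bad_row[OF rng(3) ij])
              show "{z\<in>C. snd z = r} = {(i,r),(j,r)}" by (rule L3[OF rowR ir jr])
              show "{z\<in>C. fst z = i} = {(i,r)}" by (rule L1[OF colI ir is'])
              show "{z\<in>C. fst z = j} = {(j,r)}" by (rule L1[OF colJ jr False])
            qed
          qed
        next
          case ir: False
          then have is': "(i,s) \<in> C" using ci by blast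
          show False
          proof (cases "(j,r) \<in> C")
            case True
            then have js: "(j,s) \<notin> C" using n2 by blast
            have "{z\<in>C. fst z = i} = {(i,s)}" by (rule L1[of i C s r]) (use colI is' ir in blast)+
            moreover have "{z\<in>C. snd z = s} = {(i,s)}" by (rule L2[OF rowS is' js])
            moreover have "{z\<in>C. fst z = j} = {(j,r)}" by (rule L1[OF colJ True js])
            moreover have "{z\<in>C. snd z = r} = {(j,r)}" by (rule L2[of r C j i]) (use rowR True ir in blast)+
            ultimately have "isolated n m C (i,s)" "isolated n m C (j,r)"
              unfolding isolated_def CI RI by simp_all
            then show False using two_iso is' True ij by blast
          next
            case False
            then have js: "(j,s) \<in> C" using cj by blast
            show False
            proof (rule bad_row[OF rng(4) ij])
              show "{z\<in>C. snd z = s} = {(i,s),(j,s)}" by (rule L3[OF rowS is' js])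
              show "{z\<in>C. fst z = i} = {(i,s)}" by (rule L1[of i C s r]) (use colI is' ir in blast)+
              show "{z\<in>C. fst z = j} = {(j,s)}" by (rule L1[of j C s r]) (use colJ js False in blast)+
            qed
          qed
        qed
      qed
    qed
  qed
  show ?thesis unfolding identifying_code_def using dom sep by blast
qed

end
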